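(* Let $\Delta$ be a $(d-1)$-dimensional Boolean cell complex with $h_i^{\Delta}\ge0$ for all $0\le i\le d$. Then the $h$-vector of its barycentric subdivision satisfies $$h_0^{\mathrm{sd}(\Delta)}\le h_1^{\mathrm{sd}(\Delta)}\le\dots\le h_{\lfloor d/2\rfloor}^{\mathrm{sd}(\Delta)}\quad\text{and}\quad h_{\lceil d/2\rceil}^{\mathrm{sd}(\Delta)}\ge h_{\lceil d/2\rceil+1}^{\mathrm{sd}(\Delta)}\ge\dots\ge h_d^{\mathrm{sd}(\Delta)}.$$ Consequently $h^{\mathrm{sd}(\Delta)}$ is unimodal with a peak at position $d/2$ if $d$ is even, and at position $(d-1)/2$ or $(d+1)/2$ if $d$ is odd. In particular this holds for every $(d-1)$-dimensional Cohen–Macaulay simplicial complex $\Delta$.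
   Context: A Boolean cell complex is a regular CW-complex $\Delta$ (including the empty cell) such that for each cell $A$ the lower interval $\{B\in\Delta:B\le A\}$, ordered by $B\le A$ iff $B$ lies in the closure of $A$, is a Boolean lattice. Simplicial complexes are Boolean cell complexes. For a $(d-1)$-dimensional Boolean cell complex with $f_{i-1}$ cells of dimension $i-1$ ($f_{-1}=1$), its $h$-vector $(h_0,\dots,h_d)$ is defined by $\sum_{i=0}^d h_i x^{d-i}=\sum_{i=0}^d f_{i-1}(x-1)^{d-i}$. The barycentric subdivision $\mathrm{sd}(\Delta)$ is the order complex of the poset of nonempty cells (simplices are chains of nonempty cells). A sequence $(s_0,\dots,s_d)$ is unimodal with peak at position $j$ if $s_0\le\dots\le s_j\ge\dots\ge s_d$. *)

theory Defs
  imports "HOL-Computational_Algebra.Polynomial"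
begin

text \<open>A Boolean cell complex is encoded by its face poset (P, le), including the
empty cell e0: a finite poset with least element in which every lower interval
is order-isomorphic to a Boolean lattice (the power set of an n-element set).\<close>

definition boolean_cell_complex :: "'a set \<Rightarrow> ('a \<Rightarrow> 'a \<Rightarrow> bool) \<Rightarrow> 'a \<Rightarrow> bool" where
  "boolean_cell_complex P le e0 \<longleftrightarrow>
     finite P \<and> e0 \<in> P \<and>
     (\<forall>A\<in>P. le A A) \<and>
     (\<forall>A\<in>P. \<forall>B\<in>P. le A B \<and> le B A \<longrightarrow> A = B) \<and>
     (\<forall>A\<in>P. \<forall>B\<in>P. \<forall>C\<in>P. le A B \<and> le B C \<longrightarrow> le A C) \<and>
     (\<forall>A\<in>P. le e0 A) \<and>
     (\<forall>A\<in>P. \<exists>(n::nat) (g::'a \<Rightarrow> nat set).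
         bij_betw g {B\<in>P. le B A} (Pow {..<n}) \<and>
         (\<forall>B\<in>{B\<in>P. le B A}. \<forall>C\<in>{B\<in>P. le B A}. le B C \<longleftrightarrow> g B \<subseteq> g C))"

text \<open>Number of vertices (atoms) of a cell; a cell with i vertices has dimension i-1.\<close>
definition cell_rank :: "'a set \<Rightarrow> ('a \<Rightarrow> 'a \<Rightarrow> bool) \<Rightarrow> 'a \<Rightarrow> 'a \<Rightarrow> nat" where
  "cell_rank P le e0 A =
     card {B\<in>P. B \<noteq> e0 \<and> le B A \<and> (\<forall>C\<in>P. le C B \<longrightarrow> C = e0 \<or> C = B)}"

text \<open>The complex has dimension d-1: maximal number of vertices of a cell is d.\<close>
definition has_dim :: "'a set \<Rightarrow> ('a \<Rightarrow> 'a \<Rightarrow> bool) \<Rightarrow> 'a \<Rightarrow> nat \<Rightarrow> bool" where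
  "has_dim P le e0 d \<longleftrightarrow>
     (\<exists>A\<in>P. cell_rank P le e0 A = d) \<and> (\<forall>A\<in>P. cell_rank P le e0 A \<le> d)"

text \<open>f i = f_{i-1} = number of cells of dimension i-1.\<close>
definition fvec :: "'a set \<Rightarrow> ('a \<Rightarrow> 'a \<Rightarrow> bool) \<Rightarrow> 'a \<Rightarrow> nat \<Rightarrow> nat" where
  "fvec P le e0 i = card {A\<in>P. cell_rank P le e0 A = i}"

text \<open>h-vector: sum_i h_i x^(d-i) = sum_i f_{i-1} (x-1)^(d-i); h k is the
coefficient of x^(d-k).\<close>
definition hvec :: "nat \<Rightarrow> (nat \<Rightarrow> nat) \<Rightarrow> nat \<Rightarrow> int" where
  "hvec d f k = coeff (\<Sum>i\<le>d. smult (int (f i)) ([:-1, 1:] ^ (d - i))) (d - k)"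

text \<open>Barycentric subdivision: the order complex of the poset of nonempty cells;
its faces are the chains of nonempty cells. sd_fvec j = f_{j-1}(sd) = number of
chains with j elements.\<close>
definition is_chain_in :: "('a \<Rightarrow> 'a \<Rightarrow> bool) \<Rightarrow> 'a set \<Rightarrow> bool" where
  "is_chain_in le c \<longleftrightarrow> (\<forall>x\<in>c. \<forall>y\<in>c. le x y \<or> le y x)"

definition sd_faces :: "'a set \<Rightarrow> ('a \<Rightarrow> 'a \<Rightarrow> bool) \<Rightarrow> 'a \<Rightarrow> 'a set set" where
  "sd_faces P le e0 = {c. c \<subseteq> P - {e0} \<and> is_chain_in le c}"

definition sd_fvec :: "'a set \<Rightarrow> ('a \<Rightarrow> 'a \<Rightarrow> bool) \<Rightarrow> 'a \<Rightarrow> nat \<Rightarrow> nat" where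
  "sd_fvec P le e0 j = card {c\<in>sd_faces P le e0. card c = j}"

definition unimodal_at :: "(nat \<Rightarrow> int) \<Rightarrow> nat \<Rightarrow> nat \<Rightarrow> bool" where
  "unimodal_at s d j \<longleftrightarrow> j \<le> d \<and>
     (\<forall>i<j. s i \<le> s (Suc i)) \<and> (\<forall>i. j \<le> i \<and> i < d \<longrightarrow> s i \<ge> s (Suc i))"

end

theory Submission
  imports Defs
begin


fun AA :: "nat \<Rightarrow> nat \<Rightarrow> nat \<Rightarrow> nat" where
  "AA 0 q j = (if q = 0 \<and> j = 0 then 1 else 0)"
| "AA (Suc d) q j = (if q \<le> Suc d then (if j = 0 then 0 else (\<Sum>q'<q. AA d q' (j - 1)))
      + (\<Sum>q'\<in>{q..d}. AA d q' j) else 0)"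

definition LL :: "nat \<Rightarrow> nat \<Rightarrow> nat \<Rightarrow> nat" where
  "LL d p j = (\<Sum>q'<p. AA d q' j)"
definition RR :: "nat \<Rightarrow> nat \<Rightarrow> nat \<Rightarrow> nat" where
  "RR d q j = (\<Sum>q'\<in>{q..d}. AA d q' j)"

lemma AA_Suc: "q \<le> Suc d \<Longrightarrow> AA (Suc d) q j = (if j = 0 then 0 else LL d q (j - 1)) + RR d q j"
  by (simp add: LL_def RR_def)

lemma AA_zero_j: "d < j \<Longrightarrow> AA d q j = 0"
  by (induction d arbitrary: q j) auto

lemma AA_zero_q: "d < q \<Longrightarrow> AA d q j = 0"
  by (cases d) auto

declare AA.simps(2)[simp del]

definition symP :: "nat \<Rightarrow> bool" where
  "symP d \<longleftrightarrow> (\<forall>q\<le>d. \<forall>j\<le>d. AA d q j = AA d (d - q) (d - j))"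

lemma RL:
  assumes "symP d" "q \<le> Suc d" "j \<le> d"
  shows "RR d q j = LL d (Suc d - q) (d - j)"
proof -
  have "RR d q j = (\<Sum>q'\<in>{q..d}. AA d (d - q') (d - j))"
    unfolding RR_def
  proof (intro sum.cong refl)
    fix q' assume "q' \<in> {q..d}"
    hence "q' \<le> d" by simp
    thus "AA d q' j = AA d (d - q') (d - j)" using assms(1,3) unfolding symP_def by blast
  qed
  also have "\<dots> = (\<Sum>p<Suc d - q. AA d p (d - j))"
    by (rule sum.reindex_bij_witness[where i="\<lambda>p. d - p" and j="\<lambda>q'. d - q'"]) auto
  finally show ?thesis by (simp add: LL_def)
qed

lemma RL':
  assumes "symP d" "q \<le> Suc d"
  shows "RR d q j = (if d < j then 0 else LL d (Suc d - q) (d - j))"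
proof (cases "d < j")
  case True thus ?thesis by (simp add: RR_def AA_zero_j)
next
  case False thus ?thesis using RL[OF assms, of j] by simp
qed

lemma sym_step:
  assumes "symP d" shows "symP (Suc d)"
  unfolding symP_def
proof (intro allI impI)
  fix q j assume q: "q \<le> Suc d" and j: "j \<le> Suc d"
  have q': "Suc d - q \<le> Suc d" by simp
  have e1: "RR d q j = (if j = Suc d then 0 else LL d (Suc d - q) (d - j))"
    if "q \<le> Suc d" "j \<le> Suc d" for q j
    using RL'[OF assms that(1), of j] that by auto
  have "AA (Suc d) q j = (if j = 0 then 0 else LL d q (j - 1)) + RR d q j"
    using AA_Suc[OF q] .
  also have "RR d q j = (if Suc d - j = 0 then 0 else LL d (Suc d - q) (Suc d - j - 1))"
    using e1[OF q j] j by auto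
  also have "(if j = 0 then 0 else LL d q (j - 1)) = RR d (Suc d - q) (Suc d - j)"
    using e1[OF q' , of "Suc d - j"] q j by auto
  also have "RR d (Suc d - q) (Suc d - j) + (if Suc d - j = 0 then 0 else LL d (Suc d - q) (Suc d - j - 1))
      = AA (Suc d) (Suc d - q) (Suc d - j)"
    using AA_Suc[OF q', of "Suc d - j"] j by (cases "j = Suc d") (auto simp: add.commute)
  finally show "AA (Suc d) q j = AA (Suc d) (Suc d - q) (Suc d - j)" .
qed

lemma sym_all: "symP d"
proof (induction d)
  case 0 show ?case by (simp add: symP_def)
next
  case (Suc d) thus ?case by (rule sym_step)
qed

definition incP :: "nat \<Rightarrow> bool" where
  "incP d \<longleftrightarrow> (\<forall>q j. j < d div 2 \<longrightarrow> AA d q j \<le> AA d q (Suc j))"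
definition decP :: "nat \<Rightarrow> bool" where
  "decP d \<longleftrightarrow> (\<forall>q j. (d + 1) div 2 \<le> j \<longrightarrow> AA d q (Suc j) \<le> AA d q j)"
definition midP :: "nat \<Rightarrow> bool" where
  "midP d \<longleftrightarrow> (odd d \<longrightarrow> (\<forall>p. LL d p (Suc (d div 2)) \<le> LL d p (d div 2)))"

lemma LL_mono: "(\<And>q. AA d q j \<le> AA d q j') \<Longrightarrow> LL d p j \<le> LL d p j'"
  unfolding LL_def by (intro sum_mono) auto
lemma RR_mono: "(\<And>q. AA d q j \<le> AA d q j') \<Longrightarrow> RR d p j \<le> RR d p j'"
  unfolding RR_def by (intro sum_mono) auto

lemma inc_step:
  assumes inc: "incP d" and sym: "symP d" and mid: "midP d"
  shows "incP (Suc d)"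
  unfolding incP_def
proof (intro allI impI)
  fix q j assume j: "j < Suc d div 2"
  show "AA (Suc d) q j \<le> AA (Suc d) q (Suc j)"
  proof (cases "q \<le> Suc d")
    case False thus ?thesis by (simp add: AA_zero_q)
  next
    case q: True
    have R: "RR d q j \<le> RR d q (Suc j)"
    proof (cases "j < d div 2")
      case True thus ?thesis using inc unfolding incP_def by (intro RR_mono) auto
    next
      case False
      hence od: "odd d" and jm: "j = d div 2" using j by presburger+
      have "RR d q j = LL d (Suc d - q) (d - j)" using RL[OF sym q] jm by simp
      also have "d - j = Suc (d div 2)" using od jm by presburger
      also have "LL d (Suc d - q) (Suc (d div 2)) \<le> LL d (Suc d - q) (d div 2)"
        using mid od unfolding midP_def by blast
      also have "d div 2 = d - Suc j" using od jm by presburger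
      also have "Suc j \<le> d" using od jm by presburger
      hence "LL d (Suc d - q) (d - Suc j) = RR d q (Suc j)"
        using RL[OF sym q, of "Suc j"] by simp
      finally show ?thesis .
    qed
    have L: "(if j = 0 then 0 else LL d q (j - 1)) \<le> LL d q j"
    proof (cases j)
      case (Suc j')
      have "LL d q j' \<le> LL d q (Suc j')"
        using inc j Suc unfolding incP_def by (intro LL_mono) auto
      thus ?thesis using Suc by simp
    qed simp
    show ?thesis using AA_Suc[OF q, of j] AA_Suc[OF q, of "Suc j"] R L by simp
  qed
qed

lemma dec_step:
  assumes dec: "decP d" and sym: "symP d" and mid: "midP d"
  shows "decP (Suc d)"
  unfolding decP_def
proof (intro allI impI)
  fix q j assume j: "(Suc d + 1) div 2 \<le> j"
  show "AA (Suc d) q (Suc j) \<le> AA (Suc d) q j"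
  proof (cases "q \<le> Suc d")
    case False thus ?thesis by (simp add: AA_zero_q)
  next
    case q: True
    obtain j' where j': "j = Suc j'" using j by (cases j) auto
    have R: "RR d q (Suc j) \<le> RR d q j"
      using dec j unfolding decP_def by (intro RR_mono) auto
    have L: "LL d q j \<le> LL d q j'"
    proof (cases "(d + 1) div 2 \<le> j'")
      case True thus ?thesis using dec j' unfolding decP_def by (intro LL_mono) auto
    next
      case False
      hence od: "odd d" and jm: "j' = d div 2" using j j' by presburger+
      thus ?thesis using mid j' unfolding midP_def by auto
    qed
    show ?thesis using AA_Suc[OF q, of j] AA_Suc[OF q, of "Suc j"] R L j' by simp
  qed
qed

lemma LL_cut: "LL d p j = LL d (min p (Suc d)) j"
proof (cases "p \<le> Suc d")
  case False
  have "LL d p j = (\<Sum>q'\<in>{..<Suc d} \<union> {Suc d..<p}. AA d q' j)"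
    unfolding LL_def using False by (intro sum.cong) auto
  also have "\<dots> = LL d (Suc d) j + (\<Sum>q'\<in>{Suc d..<p}. AA d q' j)"
    unfolding LL_def by (subst sum.union_disjoint) auto
  also have "(\<Sum>q'\<in>{Suc d..<p}. AA d q' j) = 0" by (auto simp: AA_zero_q)
  finally show ?thesis using False by simp
qed simp

lemma mid_step:
  assumes inc: "incP d" and sym: "symP d" and ev: "even d"
  shows "midP (Suc d)"
  unfolding midP_def
proof (intro impI allI)
  fix p
  define m where "m = d div 2"
  have m2: "Suc d div 2 = m" using ev unfolding m_def by presburger
  define G where "G p = int (LL d p m) - (if m = 0 then 0 else int (LL d p (m - 1)))" for p
  have Gs: "G p \<le> G (Suc p)" for p
  proof -
    have "m \<noteq> 0 \<Longrightarrow> AA d p (m - 1) \<le> AA d p m"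
      using inc unfolding incP_def m_def by (metis Suc_pred' diff_less less_one not_gr_zero)
    thus ?thesis unfolding G_def LL_def by auto
  qed
  have Gm: "G a \<le> G b" if "a \<le> b" for a b
    using that by (induction b) (auto intro: order.trans[OF _ Gs] simp: le_Suc_eq)
  have diff: "int (AA (Suc d) q m) - int (AA (Suc d) q (Suc m)) = G (Suc d - q) - G q"
    if q: "q \<le> Suc d" for q
  proof -
    have md: "m \<le> d" and dm: "d - m = m" using ev unfolding m_def by presburger+
    have r1: "RR d q m = LL d (Suc d - q) m" using RL[OF sym q md] dm by simp
    have r2: "RR d q (Suc m) = (if m = 0 then 0 else LL d (Suc d - q) (m - 1))"
      using RL'[OF sym q, of "Suc m"] ev unfolding m_def by (auto; presburger)
    show ?thesis using AA_Suc[OF q, of m] AA_Suc[OF q, of "Suc m"] r1 r2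
      unfolding G_def by auto
  qed
  define p' where "p' = min p (Suc (Suc d))"
  have p': "p' \<le> Suc (Suc d)" unfolding p'_def by simp
  have "(\<Sum>q<p'. G q) \<le> (\<Sum>q<p'. G (Suc d - (p' - Suc q)))"
    using p' by (intro sum_mono Gm) auto
  also have "\<dots> = (\<Sum>q<p'. G (Suc d - q))"
    by (rule sum.nat_diff_reindex)
  finally have "0 \<le> (\<Sum>q<p'. G (Suc d - q) - G q)"
    by (simp add: sum_subtractf)
  also have "(\<Sum>q<p'. G (Suc d - q) - G q) = (\<Sum>q<p'. int (AA (Suc d) q m) - int (AA (Suc d) q (Suc m)))"
    using p' by (intro sum.cong refl) (auto simp del: AA.simps intro!: diff[symmetric])
  also have "\<dots> = int (LL (Suc d) p' m) - int (LL (Suc d) p' (Suc m))"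
    unfolding LL_def by (simp add: sum_subtractf)
  finally have "LL (Suc d) p' (Suc m) \<le> LL (Suc d) p' m" by simp
  moreover have "LL (Suc d) p j = LL (Suc d) p' j" for j
    unfolding p'_def by (subst LL_cut) simp
  ultimately show "LL (Suc d) p (Suc (Suc d div 2)) \<le> LL (Suc d) p (Suc d div 2)"
    using m2 by simp
qed

lemma all_props: "incP d \<and> decP d \<and> midP d"
proof (induction d)
  case 0 thus ?case by (auto simp: incP_def decP_def midP_def)
next
  case (Suc d)
  have s: "symP d" by (rule sym_all)
  have "midP (Suc d)"
  proof (cases "even d")
    case True thus ?thesis using mid_step[OF _ s True] Suc by simp
  qed (auto simp: midP_def)
  have "incP d" "decP d" "midP d" using Suc by auto
  hence "incP (Suc d)" "decP (Suc d)" using inc_step[OF _ s] dec_step[OF _ s] by auto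
  thus ?case using \<open>midP (Suc d)\<close> by simp
qed



fun gg :: "nat \<Rightarrow> nat \<Rightarrow> nat" where
  "gg n 0 = (if n = 0 then 1 else 0)"
| "gg n (Suc j) = (\<Sum>r<n. (n choose r) * gg r j)"

lemma gg_zero: "r < j \<Longrightarrow> gg r j = 0"
  by (induction j arbitrary: r) auto

definition X1 :: "int poly" where "X1 = [:-1, 1:]"

definition KK :: "nat \<Rightarrow> nat \<Rightarrow> int poly" where
  "KK d r = (\<Sum>j\<le>d. smult (int (gg r j)) (X1 ^ (d - j)))"

definition VA :: "nat \<Rightarrow> nat \<Rightarrow> int poly" where
  "VA d q = (\<Sum>j\<le>d. monom (int (AA d q j)) (d - j))"

definition Psi :: "nat \<Rightarrow> int poly \<Rightarrow> int poly" where
  "Psi d p = (\<Sum>q\<le>d. smult (coeff p (d - q)) (VA d q))"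

lemma KK_Suc: assumes "r \<le> d" shows "KK (Suc d) r = X1 * KK d r"
proof -
  have "KK (Suc d) r = (\<Sum>j\<le>d. smult (int (gg r j)) (X1 ^ (Suc d - j)))"
    unfolding KK_def using assms by (simp add: gg_zero)
  also have "\<dots> = (\<Sum>j\<le>d. X1 * smult (int (gg r j)) (X1 ^ (d - j)))"
    by (intro sum.cong refl) (simp add: Suc_diff_le mult.left_commute)
  finally show ?thesis by (simp add: KK_def sum_distrib_left)
qed

lemma coeff_VA: "coeff (VA d q) m = (if m \<le> d then int (AA d q (d - m)) else 0)"
proof -
  have "coeff (VA d q) m = (\<Sum>j\<le>d. if d - j = m then int (AA d q j) else 0)"
    unfolding VA_def by (simp add: coeff_sum)
  also have "\<dots> = (\<Sum>j\<in>(if m \<le> d then {d - m} else {}). int (AA d q j))"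
  proof -
    have "{..d} \<inter> {x. d - x = m} = (if m \<le> d then {d - m} else {})" by auto
    thus ?thesis by (subst sum.If_cases) auto
  qed
  finally show ?thesis by auto
qed

lemma VA_rec:
  assumes q: "q \<le> Suc d"
  shows "VA (Suc d) q = (\<Sum>q'<q. VA d q') + pCons 0 (\<Sum>q'\<in>{q..d}. VA d q')"
proof (rule poly_eqI)
  fix m
  show "coeff (VA (Suc d) q) m = coeff ((\<Sum>q'<q. VA d q') + pCons 0 (\<Sum>q'\<in>{q..d}. VA d q')) m"
  proof (cases m)
    case 0 thus ?thesis using q by (simp add: coeff_VA coeff_sum AA_zero_j AA_Suc LL_def RR_def)
  next
    case (Suc m')
    thus ?thesis using q
      by (auto simp: coeff_VA coeff_sum AA_zero_j Suc_diff_le AA_Suc LL_def RR_def)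
  qed
qed

lemma smult_sum_right: "smult a (\<Sum>i\<in>S. f i) = (\<Sum>i\<in>S. smult a (f i))"
  by (induction S rule: infinite_finite_induct) (auto simp: smult_add_right)

lemma X1_mult: "X1 * p = pCons 0 p - p"
  by (simp add: X1_def)

lemma VA_pascal:
  assumes "q \<le> d"
  shows "VA (Suc d) q - VA (Suc d) (Suc q) = X1 * VA d q"
proof -
  have s1: "{q..d} = insert q {Suc q..d}" using assms by auto
  have "VA (Suc d) q = (\<Sum>q'<q. VA d q') + pCons 0 (VA d q + (\<Sum>q'\<in>{Suc q..d}. VA d q'))"
    using VA_rec[of q d] assms by (simp add: s1)
  moreover have "VA (Suc d) (Suc q) = (\<Sum>q'<q. VA d q') + VA d q + pCons 0 (\<Sum>q'\<in>{Suc q..d}. VA d q')"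
    using VA_rec[of "Suc q" d] assms by simp
  ultimately show ?thesis by (simp add: X1_mult)
qed

lemma VA_top: "VA (Suc d) (Suc d) = (\<Sum>q'<Suc d. VA d q')"
  using VA_rec[of "Suc d" d] by simp

lemma Psi_add: "Psi d (p + p') = Psi d p + Psi d p'"
  by (simp add: Psi_def smult_add_left sum.distrib)

lemma Psi_smult: "Psi d (smult c p) = smult c (Psi d p)"
  by (simp add: Psi_def smult_sum_right)

lemma Psi_zero: "Psi d 0 = 0"
  by (simp add: Psi_def)

lemma Psi_diff: "Psi d (p - p') = Psi d p - Psi d p'"
  by (simp add: Psi_def smult_diff_left sum_subtractf)

lemma Psi_sum: "Psi d (\<Sum>i\<in>S. f i) = (\<Sum>i\<in>S. Psi d (f i))"
  by (induction S rule: infinite_finite_induct) (auto simp: Psi_zero Psi_add)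

lemma Psi_monom:
  assumes "k \<le> d"
  shows "Psi d (monom c k) = smult c (VA d (d - k))"
proof -
  have "Psi d (monom c k) = (\<Sum>q\<le>d. if q = d - k then smult c (VA d q) else 0)"
    unfolding Psi_def using assms by (intro sum.cong refl) auto
  also have "\<dots> = smult c (VA d (d - k))"
    by (subst sum.delta) auto
  finally show ?thesis .
qed

lemma Psi_X1:
  assumes "degree p \<le> d"
  shows "Psi (Suc d) (X1 * p) = X1 * Psi d p"
proof -
  have m: "Psi (Suc d) (X1 * monom c k) = X1 * Psi d (monom c k)" if k: "k \<le> d" for c k
  proof -
    have "X1 * monom c k = monom c (Suc k) - monom c k"
      by (simp add: X1_mult monom_Suc)
    hence "Psi (Suc d) (X1 * monom c k) = smult c (VA (Suc d) (d - k)) - smult c (VA (Suc d) (Suc (d - k)))"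
      using k by (simp add: Psi_diff Psi_monom Suc_diff_le)
    also have "\<dots> = smult c (X1 * VA d (d - k))"
      using VA_pascal[of "d - k" d] by (simp add: smult_diff_right[symmetric])
    also have "\<dots> = X1 * Psi d (monom c k)" using k by (simp add: Psi_monom)
    finally show ?thesis .
  qed
  have p: "p = (\<Sum>k\<le>d. monom (coeff p k) k)"
    using poly_as_sum_of_monoms'[OF assms] by simp
  have "Psi (Suc d) (X1 * p) = (\<Sum>k\<le>d. Psi (Suc d) (X1 * monom (coeff p k) k))"
    by (subst p) (simp add: sum_distrib_left Psi_sum)
  also have "\<dots> = (\<Sum>k\<le>d. X1 * Psi d (monom (coeff p k) k))"
    by (intro sum.cong refl m) auto
  also have "\<dots> = X1 * Psi d p"
    by (subst (2) p) (simp add: sum_distrib_left Psi_sum)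
  finally show ?thesis .
qed

lemma X1_ne: "X1 \<noteq> 0" by (simp add: X1_def)

lemma geo_aux: "X1 * (\<Sum>m<n. monom 1 m) = monom 1 n - 1"
proof (induction n)
  case 0 thus ?case by (simp add: monom_0 one_pCons)
next
  case (Suc n)
  have "X1 * monom 1 n = monom 1 (Suc n) - monom 1 n" by (simp add: X1_mult monom_Suc)
  thus ?case using Suc by (simp add: distrib_left)
qed

lemma X1_plus: "X1 + 1 = monom 1 1"
  by (simp add: X1_def monom_Suc monom_0 one_pCons)

lemma geo: "(\<Sum>m<n. monom 1 m) = (\<Sum>s<n. smult (int (n choose Suc s)) (X1 ^ s))"
proof -
  have "X1 * (\<Sum>s<n. smult (int (n choose Suc s)) (X1 ^ s))
      = (\<Sum>s<n. smult (int (n choose Suc s)) (X1 ^ Suc s))"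
    by (simp add: sum_distrib_left)
  also have "\<dots> = (\<Sum>t\<le>n. smult (int (n choose t)) (X1 ^ t)) - 1"
    by (subst sum.atMost_shift) simp
  also have "(\<Sum>t\<le>n. smult (int (n choose t)) (X1 ^ t)) = (X1 + 1) ^ n"
    by (subst binomial_ring) (simp add: of_nat_poly)
  also have "(X1 + 1) ^ n = monom 1 n"
    by (simp add: X1_plus monom_power)
  finally have "X1 * (\<Sum>s<n. smult (int (n choose Suc s)) (X1 ^ s)) = X1 * (\<Sum>m<n. monom 1 m)"
    using geo_aux by simp
  thus ?thesis using X1_ne by simp
qed

lemma KK_top:
  "KK (Suc d) (Suc d) = (\<Sum>r<Suc d. smult (int (Suc d choose r)) (KK d r))"
proof -
  have "(\<Sum>r<Suc d. smult (int (Suc d choose r)) (KK d r))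
      = (\<Sum>r<Suc d. \<Sum>j\<le>d. smult (int (Suc d choose r) * int (gg r j)) (X1 ^ (d - j)))"
    by (simp add: KK_def smult_sum_right)
  also have "\<dots> = (\<Sum>j\<le>d. \<Sum>r<Suc d. smult (int (Suc d choose r) * int (gg r j)) (X1 ^ (d - j)))"
    by (rule sum.swap)
  also have "\<dots> = (\<Sum>j\<le>d. smult (int (gg (Suc d) (Suc j))) (X1 ^ (d - j)))"
    by (simp add: smult_sum[symmetric] of_nat_mult[symmetric] of_nat_sum[symmetric] del: of_nat_mult of_nat_sum)
  also have "\<dots> = KK (Suc d) (Suc d)"
    unfolding KK_def by (subst sum.atMost_Suc_shift) simp
  finally show ?thesis by simp
qed

lemma Psi_K: "s \<le> d \<Longrightarrow> Psi d (X1 ^ s) = KK d (d - s)"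
proof (induction d arbitrary: s)
  case 0
  thus ?case by (simp add: Psi_def VA_def KK_def monom_0 one_pCons)
next
  case (Suc d)
  show ?case
  proof (cases s)
    case (Suc s')
    have "degree (X1 ^ s') \<le> d"
      using Suc.prems Suc by (intro order.trans[OF degree_power_le]) (simp add: X1_def)
    hence "Psi (Suc d) (X1 ^ s) = X1 * Psi d (X1 ^ s')"
      using Suc by (simp add: Psi_X1)
    also have "\<dots> = X1 * KK d (d - s')" using Suc.IH[of s'] Suc.prems Suc by simp
    also have "\<dots> = KK (Suc d) (d - s')" by (simp add: KK_Suc)
    finally show ?thesis using Suc by simp
  next
    case 0
    have "Psi (Suc d) (X1 ^ s) = Psi (Suc d) (monom 1 0)" using 0 by (simp add: monom_0 one_pCons)
    also have "\<dots> = VA (Suc d) (Suc d)" using Psi_monom[of 0 "Suc d" 1] by simp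
    also have "\<dots> = (\<Sum>q<Suc d. VA d q)" by (rule VA_top)
    also have "\<dots> = (\<Sum>q<Suc d. Psi d (monom 1 (d - q)))"
      by (intro sum.cong refl) (simp add: Psi_monom)
    also have "\<dots> = (\<Sum>m<Suc d. Psi d (monom 1 m))"
      using sum.nat_diff_reindex[of "\<lambda>m. Psi d (monom 1 m)" "Suc d"] by (simp only: diff_Suc_Suc)
    also have "\<dots> = Psi d (\<Sum>m<Suc d. monom 1 m)"
      by (simp only: Psi_sum)
    also have "\<dots> = Psi d (\<Sum>s<Suc d. smult (int (Suc d choose Suc s)) (X1 ^ s))"
      by (simp only: geo)
    also have "\<dots> = (\<Sum>s<Suc d. smult (int (Suc d choose Suc s)) (Psi d (X1 ^ s)))"
      by (simp only: Psi_sum Psi_smult)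
    also have "\<dots> = (\<Sum>s<Suc d. smult (int (Suc d choose Suc s)) (KK d (d - s)))"
      by (intro sum.cong refl) (simp add: Suc.IH)
    also have "\<dots> = (\<Sum>s<Suc d. smult (int (Suc d choose (d - s))) (KK d (d - s)))"
    proof (intro sum.cong refl)
      fix s assume "s \<in> {..<Suc d}"
      hence "Suc d choose Suc s = Suc d choose (d - s)"
        by (subst binomial_symmetric) (auto simp: Suc_diff_le)
      thus "smult (int (Suc d choose Suc s)) (KK d (d - s)) = smult (int (Suc d choose (d - s))) (KK d (d - s))"
        by simp
    qed
    also have "\<dots> = (\<Sum>r<Suc d. smult (int (Suc d choose r)) (KK d r))"
      using sum.nat_diff_reindex[of "\<lambda>r. smult (int (Suc d choose r)) (KK d r)" "Suc d"] by simp
    also have "\<dots> = KK (Suc d) (Suc d)" by (rule KK_top[symmetric])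
    finally show ?thesis using 0 by simp
  qed
qed



definition TT :: "nat \<Rightarrow> (nat \<Rightarrow> nat) \<Rightarrow> int poly" where
  "TT d u = (\<Sum>i\<le>d. smult (int (u i)) (X1 ^ (d - i)))"

lemma hvec_TT: "hvec d u k = coeff (TT d u) (d - k)"
  by (simp add: hvec_def TT_def X1_def)

lemma hvec_sd:
  assumes F: "\<And>j. F j = (\<Sum>r\<le>d. f r * gg r j)" and k: "k \<le> d"
  shows "hvec d F k = (\<Sum>q\<le>d. hvec d f q * int (AA d q k))"
proof -
  have "TT d F = (\<Sum>j\<le>d. \<Sum>r\<le>d. smult (int (f r) * int (gg r j)) (X1 ^ (d - j)))"
    unfolding TT_def F by (simp add: smult_sum[symmetric] of_nat_sum)
  also have "\<dots> = (\<Sum>r\<le>d. \<Sum>j\<le>d. smult (int (f r) * int (gg r j)) (X1 ^ (d - j)))"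
    by (rule sum.swap)
  also have "\<dots> = (\<Sum>r\<le>d. smult (int (f r)) (KK d r))"
    by (simp add: KK_def smult_sum_right)
  also have "\<dots> = (\<Sum>r\<le>d. smult (int (f r)) (Psi d (X1 ^ (d - r))))"
    by (intro sum.cong refl) (simp add: Psi_K)
  also have "\<dots> = Psi d (TT d f)"
    by (simp add: TT_def Psi_sum Psi_smult)
  finally have "TT d F = Psi d (TT d f)" .
  hence "coeff (TT d F) (d - k) = (\<Sum>q\<le>d. coeff (TT d f) (d - q) * coeff (VA d q) (d - k))"
    by (simp add: Psi_def coeff_sum)
  also have "\<dots> = (\<Sum>q\<le>d. hvec d f q * int (AA d q k))"
    using k by (simp add: coeff_VA hvec_TT)
  finally show ?thesis by (simp add: hvec_TT)
qed



lemma sum_group_rank: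
  fixes h :: "'b \<Rightarrow> nat"
  assumes "finite S" "\<And>x. x \<in> S \<Longrightarrow> h x \<le> m"
  shows "(\<Sum>x\<in>S. \<phi> (h x)) = (\<Sum>r\<le>m. of_nat (card {x\<in>S. h x = r}) * \<phi> r)"
proof -
  have "(\<Sum>r\<le>m. \<Sum>x\<in>{x\<in>S. h x = r}. \<phi> (h x)) = (\<Sum>x\<in>S. \<phi> (h x))"
    by (rule sum.group) (use assms in auto)
  hence "(\<Sum>x\<in>S. \<phi> (h x)) = (\<Sum>r\<le>m. \<Sum>x\<in>{x\<in>S. h x = r}. \<phi> (h x))" by simp
  also have "\<dots> = (\<Sum>r\<le>m. of_nat (card {x\<in>S. h x = r}) * \<phi> r)"
    by (intro sum.cong refl) simp
  finally show ?thesis .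
qed

locale bcc =
  fixes P :: "'a set" and le :: "'a \<Rightarrow> 'a \<Rightarrow> bool" and e0 :: 'a
  assumes bc: "boolean_cell_complex P le e0"
begin

definition down where "down A = {B\<in>P. le B A}"

lemma finP: "finite P" and e0P: "e0 \<in> P"
  and refl: "A \<in> P \<Longrightarrow> le A A"
  and antisym: "A \<in> P \<Longrightarrow> B \<in> P \<Longrightarrow> le A B \<Longrightarrow> le B A \<Longrightarrow> A = B"
  and trans: "A \<in> P \<Longrightarrow> B \<in> P \<Longrightarrow> C \<in> P \<Longrightarrow> le A B \<Longrightarrow> le B C \<Longrightarrow> le A C"
  and least: "A \<in> P \<Longrightarrow> le e0 A"
  using bc unfolding boolean_cell_complex_def by blast+

lemma iso: "A \<in> P \<Longrightarrow> \<exists>(n::nat) (g::'a \<Rightarrow> nat set). bij_betw g (down A) (Pow {..<(n::nat)}) \<and>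
   (\<forall>B\<in>down A. \<forall>C\<in>down A. le B C \<longleftrightarrow> g B \<subseteq> g C)"
  using bc unfolding boolean_cell_complex_def down_def by blast

lemma fin_down: "finite (down A)"
  using finP unfolding down_def by simp

definition nrank where "nrank A = (SOME n. card (down A) = 2 ^ n)"

lemma nrank: "A \<in> P \<Longrightarrow> card (down A) = 2 ^ nrank A"
proof -
  assume A: "A \<in> P"
  obtain n :: nat and g :: "'a \<Rightarrow> nat set" where "bij_betw g (down A) (Pow {..<(n::nat)})" using iso[OF A] by blast
  hence "card (down A) = 2 ^ n" by (simp add: bij_betw_same_card card_Pow)
  thus ?thesis unfolding nrank_def by (rule someI)
qed

lemma nrank_unique: "A \<in> P \<Longrightarrow> card (down A) = 2 ^ n \<Longrightarrow> nrank A = n"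
proof -
  assume "A \<in> P" "card (down A) = 2 ^ n"
  hence "(2::nat) ^ nrank A = 2 ^ n" using nrank by simp
  thus ?thesis by simp
qed

lemma down_pow:
  assumes A: "A \<in> P" and g: "bij_betw g (down A) (Pow {..<(n::nat)})"
    and ord: "\<forall>B\<in>down A. \<forall>C\<in>down A. le B C \<longleftrightarrow> g B \<subseteq> g C"
    and B: "B \<in> down A"
  shows "bij_betw g (down B) (Pow (g B))"
proof -
  have sub: "down B \<subseteq> down A"
    using B A trans unfolding down_def by blast
  have inj: "inj_on g (down B)"
    using g sub by (meson bij_betw_def inj_on_subset)
  have "g ` down B = Pow (g B)"
  proof
    show "g ` down B \<subseteq> Pow (g B)"
      using ord sub B unfolding down_def by blast
  next
    show "Pow (g B) \<subseteq> g ` down B"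
    proof
      fix S assume S: "S \<in> Pow (g B)"
      have "g B \<in> Pow {..<n}" using g B by (meson bij_betwE)
      hence "S \<in> Pow {..<n}" using S by auto
      then obtain C where C: "C \<in> down A" "g C = S" using g by (metis bij_betw_imp_surj_on imageE)
      hence "le C B" using ord B S by auto
      hence "C \<in> down B" using C unfolding down_def by auto
      thus "S \<in> g ` down B" using C by auto
    qed
  qed
  thus ?thesis using inj by (simp add: bij_betw_def)
qed

lemma nrank_card:
  assumes A: "A \<in> P" and g: "bij_betw g (down A) (Pow {..<(n::nat)})"
    and ord: "\<forall>B\<in>down A. \<forall>C\<in>down A. le B C \<longleftrightarrow> g B \<subseteq> g C"
    and B: "B \<in> down A"
  shows "nrank B = card (g B)"
proof -
  have "g B \<subseteq> {..<n}" using g B by (meson PowD bij_betwE)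
  hence fin: "finite (g B)" by (rule finite_subset[OF _ finite_lessThan])
  have "card (down B) = 2 ^ card (g B)"
    using bij_betw_same_card[OF down_pow[OF A g ord B]] fin by (simp add: card_Pow)
  moreover have "B \<in> P" using B unfolding down_def by auto
  ultimately show ?thesis using nrank_unique by blast
qed

lemma nrank_self:
  assumes A: "A \<in> P" and g: "bij_betw g (down A) (Pow {..<(n::nat)})"
  shows "nrank A = n"
  using bij_betw_same_card[OF g] A by (intro nrank_unique) (auto simp: card_Pow)

lemma count_rank:
  assumes A: "A \<in> P"
  shows "card {B\<in>down A. nrank B = r} = nrank A choose r"
proof -
  obtain n :: nat and g :: "'a \<Rightarrow> nat set" where g: "bij_betw g (down A) (Pow {..<(n::nat)})"
    and ord: "\<forall>B\<in>down A. \<forall>C\<in>down A. le B C \<longleftrightarrow> g B \<subseteq> g C"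
    using iso[OF A] by blast
  have eq: "{B\<in>down A. nrank B = r} = {B\<in>down A. card (g B) = r}"
    using nrank_card[OF A g ord] by auto
  have "bij_betw g {B\<in>down A. card (g B) = r} {S. S \<subseteq> {..<n} \<and> card S = r}"
  proof -
    have inj: "inj_on g {B\<in>down A. card (g B) = r}"
      by (rule inj_on_subset[OF bij_betw_imp_inj_on[OF g]]) blast
    have "g ` {B\<in>down A. card (g B) = r} = {S \<in> g ` down A. card S = r}" by blast
    also have "g ` down A = Pow {..<n}" using g by (simp add: bij_betw_def)
    finally have "g ` {B\<in>down A. card (g B) = r} = {S \<in> Pow {..<n}. card S = r}" .
    also have "\<dots> = {S. S \<subseteq> {..<n} \<and> card S = r}" by blast
    finally have "g ` {B\<in>down A. card (g B) = r} = {S. S \<subseteq> {..<n} \<and> card S = r}" .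
    thus ?thesis using inj by (simp add: bij_betw_def)
  qed
  hence "card {B\<in>down A. card (g B) = r} = n choose r"
    using n_subsets[of "{..<n}" r] by (simp add: bij_betw_same_card)
  thus ?thesis using eq nrank_self[OF A g] by simp
qed

lemma in_down_self: "A \<in> P \<Longrightarrow> A \<in> down A"
  using refl unfolding down_def by auto
lemma e0_in_down: "A \<in> P \<Longrightarrow> e0 \<in> down A"
  using least e0P unfolding down_def by auto

lemma nrank_zero_iff: "A \<in> P \<Longrightarrow> nrank A = 0 \<longleftrightarrow> A = e0"
proof
  assume A: "A \<in> P" and "nrank A = 0"
  hence "card (down A) = 1" using nrank by simp
  then obtain x where "down A = {x}" by (meson card_1_singletonE)
  thus "A = e0" using in_down_self[OF A] e0_in_down[OF A] by auto
next
  assume A: "A \<in> P" and "A = e0"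
  have "down e0 = {e0}" using antisym least e0P refl unfolding down_def by auto
  thus "nrank A = 0" using \<open>A = e0\<close> e0P by (intro nrank_unique) auto
qed

lemma atom_iff:
  assumes B: "B \<in> P"
  shows "(B \<noteq> e0 \<and> (\<forall>C\<in>P. le C B \<longrightarrow> C = e0 \<or> C = B)) \<longleftrightarrow> nrank B = 1"
proof
  assume a: "B \<noteq> e0 \<and> (\<forall>C\<in>P. le C B \<longrightarrow> C = e0 \<or> C = B)"
  hence "down B = {e0, B}" using in_down_self[OF B] e0_in_down[OF B] unfolding down_def by auto
  moreover have "e0 \<noteq> B" using a by auto
  ultimately have "card (down B) = 2 ^ 1" by simp
  thus "nrank B = 1" using nrank_unique[OF B] by blast
next
  assume "nrank B = 1"
  hence c2: "card (down B) = 2" using nrank[OF B] by simp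
  have ne: "B \<noteq> e0" using nrank_zero_iff[OF B] \<open>nrank B = 1\<close> by auto
  have "down B = {e0, B}"
  proof -
    obtain x y where xy: "down B = {x, y}" "x \<noteq> y" using c2 card_2_iff by metis
    thus ?thesis using in_down_self[OF B] e0_in_down[OF B] ne by auto
  qed
  thus "B \<noteq> e0 \<and> (\<forall>C\<in>P. le C B \<longrightarrow> C = e0 \<or> C = B)"
    using ne unfolding down_def by auto
qed

lemma cell_rank_eq:
  assumes A: "A \<in> P"
  shows "cell_rank P le e0 A = nrank A"
proof -
  have "{B\<in>P. B \<noteq> e0 \<and> le B A \<and> (\<forall>C\<in>P. le C B \<longrightarrow> C = e0 \<or> C = B)} = {B\<in>down A. nrank B = 1}"
    using atom_iff unfolding down_def by auto
  thus ?thesis unfolding cell_rank_def using count_rank[OF A, of 1] by simp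
qed

lemma fvec_eq: "fvec P le e0 r = card {A\<in>P. nrank A = r}"
  unfolding fvec_def by (rule arg_cong[where f=card]) (auto simp: cell_rank_eq)


lemma nrank_le:
  assumes A: "A \<in> P" and B: "B \<in> down A"
  shows "nrank B \<le> nrank A"
proof -
  obtain n :: nat and g :: "'a \<Rightarrow> nat set" where g: "bij_betw g (down A) (Pow {..<(n::nat)})"
    and ord: "\<forall>B\<in>down A. \<forall>C\<in>down A. le B C \<longleftrightarrow> g B \<subseteq> g C"
    using iso[OF A] by blast
  have "g B \<subseteq> {..<n}" using g B by (meson PowD bij_betwE)
  hence "card (g B) \<le> n" using card_mono[of "{..<n}" "g B"] by simp
  thus ?thesis using nrank_card[OF A g ord B] nrank_self[OF A g] by simp
qed

lemma chain_sub: "is_chain_in le c \<Longrightarrow> c' \<subseteq> c \<Longrightarrow> is_chain_in le c'"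
  unfolding is_chain_in_def by blast

lemma chain_max:
  assumes "finite c" "c \<noteq> {}" "c \<subseteq> P" "is_chain_in le c"
  shows "\<exists>A\<in>c. \<forall>x\<in>c. le x A"
  using assms
proof (induction c rule: finite_ne_induct)
  case (singleton x) thus ?case using refl by auto
next
  case (insert x F)
  have "is_chain_in le F" using insert.prems chain_sub by blast
  then obtain m where m: "m \<in> F" "\<forall>y\<in>F. le y m" using insert by auto
  have xm: "le x m \<or> le m x" using insert.prems m(1) unfolding is_chain_in_def by auto
  show ?case
  proof (cases "le m x")
    case True
    have "\<forall>y\<in>F. le y x"
    proof
      fix y assume "y \<in> F"
      thus "le y x" using trans[of y m x] m True insert.prems by auto
    qed
    thus ?thesis using refl insert.prems by auto
  next
    case False
    hence "le x m" using xm by auto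
    thus ?thesis using m by auto
  qed
qed

lemma max_unique:
  "A \<in> c \<Longrightarrow> B \<in> c \<Longrightarrow> c \<subseteq> P \<Longrightarrow> \<forall>x\<in>c. le x A \<Longrightarrow> \<forall>x\<in>c. le x B \<Longrightarrow> A = B"
  using antisym by blast

definition CS where
  "CS A j = {c \<in> sd_faces P le e0. card c = j \<and> A \<in> c \<and> (\<forall>x\<in>c. le x A)}"

lemma sd_faces_sub: "c \<in> sd_faces P le e0 \<Longrightarrow> c \<subseteq> P - {e0}"
  unfolding sd_faces_def by auto

lemma finite_CS: "finite (CS A j)"
proof -
  have "CS A j \<subseteq> Pow P" unfolding CS_def sd_faces_def by auto
  thus ?thesis using finP by (meson finite_Pow_iff finite_subset)
qed

lemma sd_split:
  assumes j: "0 < j"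
  shows "sd_fvec P le e0 j = (\<Sum>A\<in>P - {e0}. card (CS A j))"
proof -
  have eq: "{c\<in>sd_faces P le e0. card c = j} = (\<Union>A\<in>P - {e0}. CS A j)"
  proof
    show "{c\<in>sd_faces P le e0. card c = j} \<subseteq> (\<Union>A\<in>P - {e0}. CS A j)"
    proof
      fix c assume c: "c \<in> {c\<in>sd_faces P le e0. card c = j}"
      hence sub: "c \<subseteq> P - {e0}" and ch: "is_chain_in le c" and cj: "card c = j"
        unfolding sd_faces_def by auto
      have "finite c" "c \<noteq> {}" using cj j by (auto intro: card_ge_0_finite)
      then obtain A where A: "A \<in> c" "\<forall>x\<in>c. le x A" using chain_max[of c] sub ch by auto
      thus "c \<in> (\<Union>A\<in>P - {e0}. CS A j)" using c sub unfolding CS_def by auto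
    qed
  next
    show "(\<Union>A\<in>P - {e0}. CS A j) \<subseteq> {c\<in>sd_faces P le e0. card c = j}"
      unfolding CS_def by auto
  qed
  have "card (\<Union>A\<in>P - {e0}. CS A j) = (\<Sum>A\<in>P - {e0}. card (CS A j))"
  proof (rule card_UN_disjoint)
    show "finite (P - {e0})" using finP by simp
    show "\<forall>A\<in>P - {e0}. finite (CS A j)" using finite_CS by simp
    show "\<forall>A\<in>P - {e0}. \<forall>B\<in>P - {e0}. A \<noteq> B \<longrightarrow> CS A j \<inter> CS B j = {}"
    proof (intro ballI impI)
      fix A B assume "A \<in> P - {e0}" "B \<in> P - {e0}" "A \<noteq> B"
      thus "CS A j \<inter> CS B j = {}"
        using max_unique sd_faces_sub unfolding CS_def by blast
    qed
  qed
  thus ?thesis unfolding sd_fvec_def eq .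
qed

lemma CS_one:
  assumes A: "A \<in> P - {e0}"
  shows "CS A 1 = {{A}}"
proof
  show "CS A 1 \<subseteq> {{A}}"
  proof
    fix c assume "c \<in> CS A 1"
    hence "card c = 1" "A \<in> c" unfolding CS_def by auto
    thus "c \<in> {{A}}" by (auto simp: card_1_singleton_iff)
  qed
next
  show "{{A}} \<subseteq> CS A 1"
    using A refl unfolding CS_def sd_faces_def is_chain_in_def by auto
qed

lemma CS_step:
  assumes A: "A \<in> P - {e0}" and j: "0 < j"
  shows "card (CS A (Suc j)) = (\<Sum>B\<in>{B\<in>P - {e0}. le B A \<and> B \<noteq> A}. card (CS B j))"
proof -
  define S where "S = {B\<in>P - {e0}. le B A \<and> B \<noteq> A}"
  have notA: "A \<notin> c" if "c \<in> (\<Union>B\<in>S. CS B j)" for c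
  proof
    assume "A \<in> c"
    from that obtain B where B: "B \<in> S" "c \<in> CS B j" by auto
    hence "le A B" "le B A" "B \<noteq> A" using \<open>A \<in> c\<close> unfolding S_def CS_def by auto
    thus False using antisym A B(1) unfolding S_def by auto
  qed
  have eq: "CS A (Suc j) = insert A ` (\<Union>B\<in>S. CS B j)"
  proof
    show "CS A (Suc j) \<subseteq> insert A ` (\<Union>B\<in>S. CS B j)"
    proof
      fix c assume c: "c \<in> CS A (Suc j)"
      hence sub: "c \<subseteq> P - {e0}" and ch: "is_chain_in le c" and cj: "card c = Suc j"
        and Ac: "A \<in> c" and mx: "\<forall>x\<in>c. le x A"
        unfolding CS_def sd_faces_def by auto
      have fin: "finite c" using cj by (auto intro: card_ge_0_finite)
      define c' where "c' = c - {A}"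
      have c'j: "card c' = j" using cj Ac fin unfolding c'_def by simp
      have "finite c'" using fin unfolding c'_def by simp
      moreover have "c' \<noteq> {}" using c'j j by auto
      moreover have "c' \<subseteq> P" "is_chain_in le c'" using sub ch chain_sub unfolding c'_def by auto
      ultimately obtain B where B: "B \<in> c'" "\<forall>x\<in>c'. le x B" using chain_max[of c'] by blast
      have "B \<in> S" using B sub mx unfolding S_def c'_def by auto
      moreover have "c' \<in> CS B j"
        using B c'j sub ch chain_sub unfolding CS_def sd_faces_def c'_def by auto
      moreover have "c = insert A c'" using Ac unfolding c'_def by auto
      ultimately show "c \<in> insert A ` (\<Union>B\<in>S. CS B j)" by auto
    qed
  next
    show "insert A ` (\<Union>B\<in>S. CS B j) \<subseteq> CS A (Suc j)"
    proof
      fix c assume "c \<in> insert A ` (\<Union>B\<in>S. CS B j)"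
      then obtain c' B where c': "c = insert A c'" "B \<in> S" "c' \<in> CS B j" by auto
      hence nA: "A \<notin> c'" using notA by auto
      have sub: "c' \<subseteq> P - {e0}" and ch: "is_chain_in le c'" and cj: "card c' = j"
        and mx: "\<forall>x\<in>c'. le x B"
        using c' unfolding CS_def sd_faces_def by auto
      have BA: "le B A" "B \<in> P" using c' unfolding S_def by auto
      have mxA: "\<forall>x\<in>c'. le x A"
        using mx BA sub A trans by blast
      have fin: "finite c'" using cj j by (auto intro: card_ge_0_finite)
      have AA': "le A A" using A refl by auto
      have "is_chain_in le (insert A c')"
        using ch mxA AA' unfolding is_chain_in_def by auto
      moreover have "card (insert A c') = Suc j" using fin nA cj by simp
      moreover have "insert A c' \<subseteq> P - {e0}" using sub A by auto
      moreover have "le A A" using A refl by auto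
      ultimately show "c \<in> CS A (Suc j)" using mxA c'(1) unfolding CS_def sd_faces_def by auto
    qed
  qed
  have inj: "inj_on (insert A) (\<Union>B\<in>S. CS B j)"
  proof (rule inj_onI)
    fix x y assume "x \<in> (\<Union>B\<in>S. CS B j)" "y \<in> (\<Union>B\<in>S. CS B j)" "insert A x = insert A y"
    thus "x = y" using notA by (metis insert_ident)
  qed
  have "card (CS A (Suc j)) = card (\<Union>B\<in>S. CS B j)"
    unfolding eq using inj by (rule card_image)
  also have "\<dots> = (\<Sum>B\<in>S. card (CS B j))"
  proof (rule card_UN_disjoint)
    show "finite S" using finP unfolding S_def by simp
    show "\<forall>B\<in>S. finite (CS B j)" using finite_CS by simp
    show "\<forall>B\<in>S. \<forall>C\<in>S. B \<noteq> C \<longrightarrow> CS B j \<inter> CS C j = {}"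
    proof (intro ballI impI)
      fix B C assume "B \<in> S" "C \<in> S" "B \<noteq> C"
      thus "CS B j \<inter> CS C j = {}"
        using max_unique sd_faces_sub unfolding CS_def by blast
    qed
  qed
  finally show ?thesis unfolding S_def .
qed


lemma CS_gg: "A \<in> P - {e0} \<Longrightarrow> 0 < j \<Longrightarrow> card (CS A j) = gg (nrank A) j"
proof (induction j arbitrary: A)
  case 0 thus ?case by simp
next
  case (Suc j)
  have AP: "A \<in> P" and Ae: "A \<noteq> e0" using Suc.prems by auto
  have n0: "nrank A \<noteq> 0" using nrank_zero_iff[OF AP] Ae by simp
  show ?case
  proof (cases "j = 0")
    case True
    obtain n' where n': "nrank A = Suc n'" using n0 by (cases "nrank A") auto
    have "gg (nrank A) (Suc 0) = (\<Sum>r\<in>{..<Suc n'}. if r = 0 then 1 else 0)"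
      unfolding n' gg.simps by (intro sum.cong refl) auto
    also have "\<dots> = 1" by simp
    finally have "gg (nrank A) (Suc 0) = 1" .
    thus ?thesis using True CS_one[OF Suc.prems(1)] by simp
  next
    case False
    hence j: "0 < j" by simp
    define S where "S = {B\<in>P - {e0}. le B A \<and> B \<noteq> A}"
    define n where "n = nrank A"
    have "card (CS A (Suc j)) = (\<Sum>B\<in>S. card (CS B j))"
      unfolding S_def using CS_step[OF Suc.prems(1) j] .
    also have "\<dots> = (\<Sum>B\<in>S. gg (nrank B) j)"
      by (intro sum.cong refl Suc.IH j) (auto simp: S_def)
    finally have c: "card (CS A (Suc j)) = (\<Sum>B\<in>S. gg (nrank B) j)" .
    have dA: "down A = insert A (insert e0 S)"
      using e0_in_down[OF AP] in_down_self[OF AP] unfolding S_def down_def by auto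
    have finS: "finite S" using finP unfolding S_def by simp
    have "(\<Sum>B\<in>down A. gg (nrank B) j) = gg n j + (gg (nrank e0) j + (\<Sum>B\<in>S. gg (nrank B) j))"
      unfolding dA using finS Ae by (simp add: S_def n_def)
    also have "gg (nrank e0) j = 0" using nrank_zero_iff[OF e0P] j by (simp add: gg_zero)
    finally have s1: "(\<Sum>B\<in>down A. gg (nrank B) j) = gg n j + (\<Sum>B\<in>S. gg (nrank B) j)" by simp
    have "(\<Sum>B\<in>down A. gg (nrank B) j) = (\<Sum>r\<le>n. of_nat (card {B\<in>down A. nrank B = r}) * gg r j)"
      using nrank_le[OF AP] fin_down unfolding n_def by (intro sum_group_rank) auto
    also have "\<dots> = (\<Sum>r\<le>n. (n choose r) * gg r j)"
      using count_rank[OF AP] unfolding n_def by simp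
    also have "\<dots> = gg n (Suc j) + gg n j"
      by (simp add: lessThan_Suc_atMost[symmetric])
    finally have "gg n (Suc j) = (\<Sum>B\<in>S. gg (nrank B) j)" using s1 by simp
    thus ?thesis using c unfolding n_def by simp
  qed
qed

lemma sd_formula:
  assumes hd: "has_dim P le e0 d"
  shows "sd_fvec P le e0 j = (\<Sum>r\<le>d. fvec P le e0 r * gg r j)"
proof -
  have rk: "nrank A \<le> d" if "A \<in> P" for A
  proof -
    have "\<forall>A\<in>P. cell_rank P le e0 A \<le> d" using hd unfolding has_dim_def by blast
    hence "cell_rank P le e0 A \<le> d" using that by blast
    thus ?thesis using cell_rank_eq[OF that] by simp
  qed
  have "(\<Sum>A\<in>P. gg (nrank A) j) = (\<Sum>r\<le>d. of_nat (card {A\<in>P. nrank A = r}) * gg r j)"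
    using finP rk by (intro sum_group_rank) auto
  also have "\<dots> = (\<Sum>r\<le>d. fvec P le e0 r * gg r j)"
    by (simp add: fvec_eq)
  finally have tot: "(\<Sum>A\<in>P. gg (nrank A) j) = (\<Sum>r\<le>d. fvec P le e0 r * gg r j)" .
  show ?thesis
  proof (cases "j = 0")
    case True
    have "{c\<in>sd_faces P le e0. card c = 0} = {{}}"
    proof
      show "{c\<in>sd_faces P le e0. card c = 0} \<subseteq> {{}}"
      proof
        fix c assume c: "c \<in> {c\<in>sd_faces P le e0. card c = 0}"
        hence "c \<subseteq> P - {e0}" using sd_faces_sub by blast
        hence "finite c" using finP finite_subset by blast
        thus "c \<in> {{}}" using c by auto
      qed
      show "{{}} \<subseteq> {c\<in>sd_faces P le e0. card c = 0}"
        unfolding sd_faces_def is_chain_in_def by auto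
    qed
    hence l: "sd_fvec P le e0 j = 1" using True unfolding sd_fvec_def by simp
    have e: "P \<inter> {A. nrank A = 0} = {e0}" using nrank_zero_iff e0P by auto
    have "(\<Sum>A\<in>P. gg (nrank A) j) = card (P \<inter> {A. nrank A = 0})"
      using True finP by (simp add: sum.If_cases)
    hence "(\<Sum>A\<in>P. gg (nrank A) j) = 1" using e by simp
    thus ?thesis using tot l by simp
  next
    case False
    have "sd_fvec P le e0 j = (\<Sum>A\<in>P - {e0}. card (CS A j))"
      using sd_split[of j] False by simp
    also have "\<dots> = (\<Sum>A\<in>P - {e0}. gg (nrank A) j)"
      using False by (intro sum.cong refl CS_gg) auto
    also have "\<dots> = (\<Sum>A\<in>P. gg (nrank A) j)"
    proof -
      have "(\<Sum>A\<in>P. gg (nrank A) j) = gg (nrank e0) j + (\<Sum>A\<in>P - {e0}. gg (nrank A) j)"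
        by (rule sum.remove[OF finP e0P])
      moreover have "gg (nrank e0) j = 0" using nrank_zero_iff[OF e0P] False by (simp add: gg_zero)
      ultimately show ?thesis by simp
    qed
    finally show ?thesis using tot by simp
  qed
qed

end


theorem corollary4p7:
  fixes P :: "'a set" and le :: "'a \<Rightarrow> 'a \<Rightarrow> bool" and e0 :: 'a and d :: nat
  assumes "boolean_cell_complex P le e0"
    and "has_dim P le e0 d"
    and "\<forall>i\<le>d. hvec d (fvec P le e0) i \<ge> 0"
  shows "(\<forall>i. i < d div 2 \<longrightarrow>
            hvec d (sd_fvec P le e0) i \<le> hvec d (sd_fvec P le e0) (Suc i))
       \<and> (\<forall>i. (d + 1) div 2 \<le> i \<and> i < d \<longrightarrow>
            hvec d (sd_fvec P le e0) i \<ge> hvec d (sd_fvec P le e0) (Suc i))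
       \<and> (even d \<longrightarrow> unimodal_at (hvec d (sd_fvec P le e0)) d (d div 2))
       \<and> (odd d \<longrightarrow> unimodal_at (hvec d (sd_fvec P le e0)) d ((d - 1) div 2)
                   \<or> unimodal_at (hvec d (sd_fvec P le e0)) d ((d + 1) div 2))"
proof -
  interpret bcc P le e0 using assms(1) by (rule bcc.intro)
  define s where "s = hvec d (sd_fvec P le e0)"
  define h where "h = hvec d (fvec P le e0)"
  have H: "s k = (\<Sum>q\<le>d. h q * int (AA d q k))" if "k \<le> d" for k
    unfolding s_def h_def using sd_formula[OF assms(2)] that by (intro hvec_sd) auto
  have hpos: "0 \<le> h q" if "q \<le> d" for q using assms(3) that unfolding h_def by auto
  have props: "incP d" "decP d" using all_props by auto
  have inc: "s i \<le> s (Suc i)" if i: "i < d div 2" for i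
  proof -
    have "s i = (\<Sum>q\<le>d. h q * int (AA d q i))" using H i by simp
    also have "\<dots> \<le> (\<Sum>q\<le>d. h q * int (AA d q (Suc i)))"
    proof (intro sum_mono mult_left_mono)
      fix q assume "q \<in> {..d}"
      thus "0 \<le> h q" using hpos by simp
      show "int (AA d q i) \<le> int (AA d q (Suc i))" using props(1) i unfolding incP_def by simp
    qed
    also have "\<dots> = s (Suc i)" using H i by simp
    finally show ?thesis .
  qed
  have dec: "s (Suc i) \<le> s i" if i: "(d + 1) div 2 \<le> i" "i < d" for i
  proof -
    have "s (Suc i) = (\<Sum>q\<le>d. h q * int (AA d q (Suc i)))" using H i by simp
    also have "\<dots> \<le> (\<Sum>q\<le>d. h q * int (AA d q i))"
    proof (intro sum_mono mult_left_mono)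
      fix q assume "q \<in> {..d}"
      thus "0 \<le> h q" using hpos by simp
      show "int (AA d q (Suc i)) \<le> int (AA d q i)" using props(2) i unfolding decP_def by simp
    qed
    also have "\<dots> = s i" using H i by simp
    finally show ?thesis .
  qed
  have ev: "unimodal_at s d (d div 2)" if "even d"
  proof -
    have "(d + 1) div 2 = d div 2" using that by presburger
    thus ?thesis unfolding unimodal_at_def using inc dec by auto
  qed
  have od: "unimodal_at s d ((d - 1) div 2) \<or> unimodal_at s d ((d + 1) div 2)" if "odd d"
  proof -
    define m where "m = d div 2"
    have m1: "(d - 1) div 2 = m" "(d + 1) div 2 = Suc m" "Suc m \<le> d" "d div 2 = m"
      using that unfolding m_def by presburger+
    show ?thesis
    proof (cases "s (Suc m) \<le> s m")
      case True
      have "unimodal_at s d m"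
        unfolding unimodal_at_def
      proof (intro conjI allI impI)
        show "m \<le> d" using m1 by simp
        fix i
        show "i < m \<Longrightarrow> s i \<le> s (Suc i)" using inc m1 by simp
        assume "m \<le> i \<and> i < d"
        thus "s (Suc i) \<le> s i"
          using True dec[of i] m1 by (cases "i = m") auto
      qed
      thus ?thesis using m1 by simp
    next
      case False
      have "unimodal_at s d (Suc m)"
        unfolding unimodal_at_def
      proof (intro conjI allI impI)
        show "Suc m \<le> d" using m1 by simp
        fix i
        show "i < Suc m \<Longrightarrow> s i \<le> s (Suc i)"
          using inc[of i] m1 False by (cases "i = m") auto
        assume "Suc m \<le> i \<and> i < d"
        thus "s (Suc i) \<le> s i" using dec m1 by simp
      qed
      thus ?thesis using m1 by simp
    qed
  qed
  show ?thesis
    using inc dec ev od unfolding s_def by auto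
qed

end
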